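(* With $P=K\overline{K}$ and $Q=L\overline{L}$, the following set of monomials is a basis of the vector space $U_{K,L,norm}$: $\{PK^iE^jF^k\}_{i,j,k\ge0}\cup\{\overline{K}^iE^jF^k\}_{i>0,\,j,k\ge0}\cup\{QL^iE^jF^k\}_{i,j,k\ge0}\cup\{\overline{L}^iE^jF^k\}_{i>0,\,j,k\ge0}$.
   Context: Fix $q\in\mathbb{C}$, $q\neq 0,\pm1$. $U_{K,L,norm}$ is the unital associative $\mathbb{C}$-algebra generated by $K,\overline{K},L,\overline{L},E,F$ subject to $K\overline{K}K=K$, $\overline{K}K\overline{K}=\overline{K}$, $K\overline{K}=\overline{K}K$, $L\overline{L}L=L$, $\overline{L}L\overline{L}=\overline{L}$, $L\overline{L}=\overline{L}L$, $K\overline{K}+L\overline{L}=\mathbf{1}$, $KE=q^2EK$, $LE=q^2EL$, $\overline{K}E=q^{-2}E\overline{K}$, $\overline{L}E=q^{-2}E\overline{L}$, $KF=q^{-2}FK$, $LF=q^{-2}FL$, $\overline{K}F=q^2F\overline{K}$, $\overline{L}F=q^2F\overline{L}$, $EF-FE=\frac{(K+L)-(\overline{K}+\overline{L})}{q-q^{-1}}$. Here $PK^0=P$, $QL^0=Q$. *)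

theory Defs
  imports Complex_Main
begin

text \<open>Free unital associative C-algebra on the generators K, Kbar, L, Lbar, E, F:
  elements are finitely supported functions from words (lists of generators) to C;
  the word w stands for the monomial w_1 w_2 ... w_n, and [] is the unit.\<close>

datatype gen = GK | GKb | GL | GLb | GE | GF

type_synonym fa = "gen list \<Rightarrow> complex"

definition fa_add :: "fa \<Rightarrow> fa \<Rightarrow> fa" where
  "fa_add f g = (\<lambda>w. f w + g w)"

definition fa_sub :: "fa \<Rightarrow> fa \<Rightarrow> fa" where
  "fa_sub f g = (\<lambda>w. f w - g w)"

definition fa_smul :: "complex \<Rightarrow> fa \<Rightarrow> fa" where
  "fa_smul c f = (\<lambda>w. c * f w)"

definition fa_zero :: fa where
  "fa_zero = (\<lambda>w. 0)"

definition fa_mul :: "fa \<Rightarrow> fa \<Rightarrow> fa" where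
  "fa_mul f g = (\<lambda>w. \<Sum>i\<le>length w. f (take i w) * g (drop i w))"

definition mon :: "gen list \<Rightarrow> fa" where
  "mon u = (\<lambda>w. if w = u then 1 else 0)"

definition U_rels :: "complex \<Rightarrow> fa set" where
  "U_rels q = {
     fa_sub (mon [GK,GKb,GK]) (mon [GK]),
     fa_sub (mon [GKb,GK,GKb]) (mon [GKb]),
     fa_sub (mon [GK,GKb]) (mon [GKb,GK]),
     fa_sub (mon [GL,GLb,GL]) (mon [GL]),
     fa_sub (mon [GLb,GL,GLb]) (mon [GLb]),
     fa_sub (mon [GL,GLb]) (mon [GLb,GL]),
     fa_sub (fa_add (mon [GK,GKb]) (mon [GL,GLb])) (mon []),
     fa_sub (mon [GK,GE]) (fa_smul (q^2) (mon [GE,GK])),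
     fa_sub (mon [GL,GE]) (fa_smul (q^2) (mon [GE,GL])),
     fa_sub (mon [GKb,GE]) (fa_smul (inverse q ^ 2) (mon [GE,GKb])),
     fa_sub (mon [GLb,GE]) (fa_smul (inverse q ^ 2) (mon [GE,GLb])),
     fa_sub (mon [GK,GF]) (fa_smul (inverse q ^ 2) (mon [GF,GK])),
     fa_sub (mon [GL,GF]) (fa_smul (inverse q ^ 2) (mon [GF,GL])),
     fa_sub (mon [GKb,GF]) (fa_smul (q^2) (mon [GF,GKb])),
     fa_sub (mon [GLb,GF]) (fa_smul (q^2) (mon [GF,GLb])),
     fa_sub (fa_sub (mon [GE,GF]) (mon [GF,GE]))
            (fa_smul (1 / (q - inverse q))
               (fa_sub (fa_add (mon [GK]) (mon [GL])) (fa_add (mon [GKb]) (mon [GLb]))))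
   }"

inductive_set U_ideal :: "complex \<Rightarrow> fa set" for q :: complex where
  zero: "fa_zero \<in> U_ideal q"
| gen: "r \<in> U_rels q \<Longrightarrow> fa_mul (fa_mul (mon u) r) (mon v) \<in> U_ideal q"
| add: "a \<in> U_ideal q \<Longrightarrow> b \<in> U_ideal q \<Longrightarrow> fa_add a b \<in> U_ideal q"
| smul: "a \<in> U_ideal q \<Longrightarrow> fa_smul c a \<in> U_ideal q"

datatype btype = TP | TKb | TQ | TLb

definition basis_idx :: "(btype \<times> nat \<times> nat \<times> nat) set" where
  "basis_idx = {(t,i,j,k). (t = TKb \<or> t = TLb) \<longrightarrow> i > 0}"

fun bword :: "btype \<times> nat \<times> nat \<times> nat \<Rightarrow> gen list" where
  "bword (TP, i, j, k) = [GK,GKb] @ replicate i GK @ replicate j GE @ replicate k GF"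
| "bword (TKb, i, j, k) = replicate i GKb @ replicate j GE @ replicate k GF"
| "bword (TQ, i, j, k) = [GL,GLb] @ replicate i GL @ replicate j GE @ replicate k GF"
| "bword (TLb, i, j, k) = replicate i GLb @ replicate j GE @ replicate k GF"

definition lincomb :: "(btype \<times> nat \<times> nat \<times> nat) set \<Rightarrow> (btype \<times> nat \<times> nat \<times> nat \<Rightarrow> complex) \<Rightarrow> fa" where
  "lincomb S c = (\<lambda>w. \<Sum>b\<in>S. c b * mon (bword b) w)"

end

theory Submission
  imports Defs
begin


type_synonym idx = "bool \<times> int \<times> nat \<times> nat"
type_synonym vec = "idx \<Rightarrow> complex"

definition om :: "complex \<Rightarrow> int \<Rightarrow> complex" where "om q i = (q^2) powi i"
definition dd :: "complex \<Rightarrow> complex" where "dd q = q - inverse q"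

primrec c1 :: "complex \<Rightarrow> nat \<Rightarrow> complex" where
  "c1 q 0 = 0" | "c1 q (Suc j) = 1 + inverse (q^2) * c1 q j"
primrec c2 :: "complex \<Rightarrow> nat \<Rightarrow> complex" where
  "c2 q 0 = 0" | "c2 q (Suc j) = 1 + q^2 * c2 q j"

definition opK :: "bool \<Rightarrow> vec \<Rightarrow> vec" where
  "opK s x = (\<lambda>(t,i,j,k). if t = s then x (t,i-1,j,k) else 0)"
definition opKb :: "bool \<Rightarrow> vec \<Rightarrow> vec" where
  "opKb s x = (\<lambda>(t,i,j,k). if t = s then x (t,i+1,j,k) else 0)"
definition opE :: "complex \<Rightarrow> vec \<Rightarrow> vec" where
  "opE q x = (\<lambda>(t,i,j,k). if j = 0 then 0 else om q (-i) * x (t,i,j-1,k))"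
definition opF :: "complex \<Rightarrow> vec \<Rightarrow> vec" where
  "opF q x = (\<lambda>(t,i,j,k). (if k = 0 then 0 else om q i * x (t,i,j,k-1))
      - om q (i-1) * c1 q (Suc j) / dd q * x (t,i-1,Suc j,k)
      + om q (i+1) * c2 q (Suc j) / dd q * x (t,i+1,Suc j,k))"

lemma om_add: "q \<noteq> 0 \<Longrightarrow> om q (a + b) = om q a * om q b"
  unfolding om_def by (rule power_int_add) simp
lemma om_diff: "q \<noteq> 0 \<Longrightarrow> om q (a - b) = om q a / om q b"
  unfolding om_def by (rule power_int_diff) simp
lemma om_minus: "om q (- a) = inverse (om q a)"
  unfolding om_def by (rule power_int_minus)
lemma om_1: "om q 1 = q^2" unfolding om_def by simp
lemma om_0: "om q 0 = 1" unfolding om_def by simp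
lemma om_nz: "q \<noteq> 0 \<Longrightarrow> om q a \<noteq> 0" unfolding om_def by simp

lemmas om_simps = om_add om_diff om_minus om_1 om_0 om_nz

lemma O16:
  assumes q: "q \<noteq> 0" and d: "dd q \<noteq> 0"
  shows "opE q (opF q x) p - opF q (opE q x) p
     = (1 / dd q) * ((opK True x p + opK False x p) - (opKb True x p + opKb False x p))"
proof -
  obtain t i j k where p: "p = (t,i,j,k)" by (cases p) auto
  show ?thesis unfolding p
    apply (cases j)
    apply (simp_all add: opE_def opF_def opK_def opKb_def om_simps q)
    apply (simp_all add: field_simps om_nz q d)
    done
qed

lemma O1: "opK s (opKb s (opK s x)) = opK s x"
  by (rule ext) (auto simp: opK_def opKb_def)
lemma O2: "opKb s (opK s (opKb s x)) = opKb s x"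
  by (rule ext) (auto simp: opK_def opKb_def)
lemma O3: "opK s (opKb s x) = opKb s (opK s x)"
  by (rule ext) (auto simp: opK_def opKb_def)
lemma O7: "opK s (opKb s x) p + opK (\<not>s) (opKb (\<not>s) x) p = x p"
  by (cases p) (auto simp: opK_def opKb_def)
lemma O8: "q \<noteq> 0 \<Longrightarrow> opK s (opE q x) p = q^2 * opE q (opK s x) p"
  by (cases p) (auto simp: opK_def opE_def om_simps field_simps)
lemma O10: "q \<noteq> 0 \<Longrightarrow> opKb s (opE q x) p = inverse q ^ 2 * opE q (opKb s x) p"
  by (cases p) (auto simp: opKb_def opE_def om_simps field_simps)
lemma O12: "q \<noteq> 0 \<Longrightarrow> dd q \<noteq> 0 \<Longrightarrow> opK s (opF q x) p = inverse q ^ 2 * opF q (opK s x) p"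
  by (cases p) (auto simp: opK_def opF_def om_simps field_simps)
lemma O14: "q \<noteq> 0 \<Longrightarrow> dd q \<noteq> 0 \<Longrightarrow> opKb s (opF q x) p = q ^ 2 * opF q (opKb s x) p"
  by (cases p) (auto simp: opKb_def opF_def om_simps field_simps)

definition ctx :: "gen list \<Rightarrow> gen list \<Rightarrow> fa \<Rightarrow> fa" where
  "ctx u v r = (\<lambda>w. if \<exists>a. w = u @ a @ v then r (THE a. w = u @ a @ v) else 0)"

lemma ctx_app [simp]: "ctx u v r (u @ a @ v) = r a"
  unfolding ctx_def by auto

lemma ctx_not: "\<forall>a. w \<noteq> u @ a @ v \<Longrightarrow> ctx u v r w = 0"
  unfolding ctx_def by auto

lemma mul_mon_left: "fa_mul (mon u) f = (\<lambda>w. if take (length u) w = u then f (drop (length u) w) else 0)"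
proof (rule ext)
  fix w
  have "fa_mul (mon u) f w = (\<Sum>i\<le>length w. if i = length u then (if take (length u) w = u then f (drop (length u) w) else 0) else 0)"
    unfolding fa_mul_def mon_def
    by (rule sum.cong) (auto)
  also have "\<dots> = (if take (length u) w = u then f (drop (length u) w) else 0)"
    by (auto simp: sum.delta' dest: arg_cong[of _ _ length])
  finally show "fa_mul (mon u) f w = (if take (length u) w = u then f (drop (length u) w) else 0)" .
qed

lemma mul_mon_right: "fa_mul f (mon v) = (\<lambda>w. if length v \<le> length w \<and> drop (length w - length v) w = v then f (take (length w - length v) w) else 0)"
proof (rule ext)
  fix w
  have "fa_mul f (mon v) w = (\<Sum>i\<le>length w. if i = length w - length v then (if length v \<le> length w \<and> drop (length w - length v) w = v then f (take (length w - length v) w) else 0) else 0)"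
    unfolding fa_mul_def mon_def
    by (rule sum.cong) (auto)
  also have "\<dots> = (if length v \<le> length w \<and> drop (length w - length v) w = v then f (take (length w - length v) w) else 0)"
    by (auto simp: sum.delta')
  finally show "fa_mul f (mon v) w = (if length v \<le> length w \<and> drop (length w - length v) w = v then f (take (length w - length v) w) else 0)" .
qed

lemma gen_eq: "fa_mul (fa_mul (mon u) r) (mon v) = ctx u v r"
proof (rule ext)
  fix w
  show "fa_mul (fa_mul (mon u) r) (mon v) w = ctx u v r w"
  proof (cases "\<exists>a. w = u @ a @ v")
    case True
    then obtain a where w: "w = u @ a @ v" by blast
    show ?thesis unfolding w mul_mon_right mul_mon_left by simp
  next
    case False
    have "\<not> (length v \<le> length w \<and> drop (length w - length v) w = v \<and>
           take (length u) (take (length w - length v) w) = u)"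
    proof
      assume H: "length v \<le> length w \<and> drop (length w - length v) w = v \<and>
           take (length u) (take (length w - length v) w) = u"
      let ?m = "take (length w - length v) w"
      have "w = ?m @ v" using H by (metis append_take_drop_id)
      moreover have "?m = u @ drop (length u) ?m" using H by (metis append_take_drop_id)
      ultimately have "w = u @ drop (length u) ?m @ v" by (metis append.assoc)
      with False show False by blast
    qed
    then show ?thesis using False unfolding mul_mon_right mul_mon_left
      by (auto simp: ctx_not)
  qed
qed

lemma ctx_I: "r \<in> U_rels q \<Longrightarrow> ctx u v r \<in> U_ideal q"
  using U_ideal.gen[of r q u v] by (simp add: gen_eq)

lemma ctx_mon: "ctx u v (mon a) = mon (u @ a @ v)"
  by (rule ext) (auto simp: ctx_def mon_def)
lemma ctx_sub: "ctx u v (fa_sub f g) = fa_sub (ctx u v f) (ctx u v g)"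
  by (rule ext) (auto simp: ctx_def fa_sub_def)
lemma ctx_add: "ctx u v (fa_add f g) = fa_add (ctx u v f) (ctx u v g)"
  by (rule ext) (auto simp: ctx_def fa_add_def)
lemma ctx_smul: "ctx u v (fa_smul c f) = fa_smul c (ctx u v f)"
  by (rule ext) (auto simp: ctx_def fa_smul_def)

lemmas ctx_simps = ctx_mon ctx_sub ctx_add ctx_smul

section \<open>Representation\<close>

definition act :: "complex \<Rightarrow> gen \<Rightarrow> vec \<Rightarrow> vec" where
  "act q g = (case g of GK \<Rightarrow> opK True | GKb \<Rightarrow> opKb True | GL \<Rightarrow> opK False
     | GLb \<Rightarrow> opKb False | GE \<Rightarrow> opE q | GF \<Rightarrow> opF q)"

fun rho :: "complex \<Rightarrow> gen list \<Rightarrow> vec \<Rightarrow> vec" where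
  "rho q [] x = x"
| "rho q (g # w) x = act q g (rho q w x)"

lemma rho_app: "rho q (u @ v) x = rho q u (rho q v x)"
  by (induction u) auto

lemma act_add: "act q g (\<lambda>p. x p + y p) = (\<lambda>p. act q g x p + act q g y p)"
  by (cases g) (auto simp: act_def opK_def opKb_def opE_def opF_def algebra_simps add_divide_distrib diff_divide_distrib fun_eq_iff)
lemma act_smul: "act q g (\<lambda>p. c * x p) = (\<lambda>p. c * act q g x p)"
  by (cases g) (auto simp: act_def opK_def opKb_def opE_def opF_def algebra_simps add_divide_distrib diff_divide_distrib fun_eq_iff)
lemma act_zero: "act q g (\<lambda>p. 0) = (\<lambda>p. 0)"
  by (cases g) (auto simp: act_def opK_def opKb_def opE_def opF_def fun_eq_iff)

lemma act_sum: "finite A \<Longrightarrow> act q g (\<lambda>p. \<Sum>a\<in>A. c a * z a p) = (\<lambda>p. \<Sum>a\<in>A. c a * act q g (z a) p)"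
proof (induction A rule: finite_induct)
  case empty then show ?case by (simp add: act_zero)
next
  case (insert a A)
  have "act q g (\<lambda>p. \<Sum>b\<in>insert a A. c b * z b p) = act q g (\<lambda>p. c a * z a p + (\<Sum>b\<in>A. c b * z b p))"
    using insert by simp
  also have "\<dots> = (\<lambda>p. c a * act q g (z a) p + (\<Sum>b\<in>A. c b * act q g (z b) p))"
    by (simp add: act_add act_smul insert.IH)
  finally show ?case using insert by simp
qed

lemma rho_sum: "finite A \<Longrightarrow> rho q u (\<lambda>p. \<Sum>a\<in>A. c a * z a p) = (\<lambda>p. \<Sum>a\<in>A. c a * rho q u (z a) p)"
  by (induction u) (auto simp: act_sum)

lemma rho_zero: "rho q u (\<lambda>p. 0) = (\<lambda>p. 0)"
  by (induction u) (auto simp: act_zero)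

definition gX :: "bool \<Rightarrow> gen" where "gX s = (if s then GK else GL)"
definition gXb :: "bool \<Rightarrow> gen" where "gXb s = (if s then GKb else GLb)"

lemma act_gX [simp]: "act q (gX s) = opK s" by (simp add: act_def gX_def)
lemma act_gXb [simp]: "act q (gXb s) = opKb s" by (simp add: act_def gXb_def)
lemma act_simps [simp]: "act q GK = opK True" "act q GKb = opKb True" "act q GL = opK False"
  "act q GLb = opKb False" "act q GE = opE q" "act q GF = opF q"
  by (simp_all add: act_def)

definition D :: "nat \<Rightarrow> nat \<Rightarrow> vec" where
  "D j k = (\<lambda>(t,i,j',k'). if i = 0 \<and> j' = j \<and> k' = k then 1 else 0)"
definition ind :: "idx \<Rightarrow> vec" where
  "ind p = (\<lambda>p'. if p' = p then 1 else 0)"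

lemma F_D: "opF q (D 0 k) = D 0 (Suc k)"
  by (auto simp: fun_eq_iff opF_def D_def om_0)
lemma E_D: "opE q (D j k) = D (Suc j) k"
  by (auto simp: fun_eq_iff opE_def D_def om_0)
lemma K_D: "opK s (D j k) = ind (s,1,j,k)"
  by (auto simp: fun_eq_iff opK_def D_def ind_def)
lemma Kb_D: "opKb s (D j k) = ind (s,-1,j,k)"
  by (auto simp: fun_eq_iff opKb_def D_def ind_def)
lemma K_ind: "opK s (ind (s,i,j,k)) = ind (s,i+1,j,k)"
  by (auto simp: fun_eq_iff opK_def ind_def)
lemma Kb_ind: "opKb s (ind (s,i,j,k)) = ind (s,i-1,j,k)"
  by (auto simp: fun_eq_iff opKb_def ind_def)

lemma rho_F: "rho q (replicate k GF) (D 0 0) = D 0 k"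
  by (induction k) (auto simp: F_D)
lemma rho_E: "rho q (replicate j GE) (D 0 k) = D j k"
  by (induction j) (auto simp: E_D)
lemma rho_T: "rho q (replicate j GE @ replicate k GF) (D 0 0) = D j k"
  by (simp add: rho_app rho_F rho_E)
lemma rho_X: "rho q (replicate n (gX s)) (D j k) = (if n = 0 then D j k else ind (s, int n, j, k))"
  by (induction n) (auto simp: K_D K_ind add.commute)
lemma rho_Xb: "rho q (replicate n (gXb s)) (D j k) = (if n = 0 then D j k else ind (s, - int n, j, k))"
  by (induction n) (auto simp: Kb_D Kb_ind intro!: arg_cong[where f=ind])

lemma rho_P: "rho q (gX s # gXb s # replicate n (gX s) @ replicate j GE @ replicate k GF) (D 0 0) = ind (s, int n, j, k)"
  by (simp add: rho_app rho_F rho_E rho_X K_D Kb_D K_ind Kb_ind)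
lemma rho_B: "n > 0 \<Longrightarrow> rho q (replicate n (gXb s) @ replicate j GE @ replicate k GF) (D 0 0) = ind (s, - int n, j, k)"
  by (simp add: rho_app rho_F rho_E rho_Xb)

fun ix :: "btype \<times> nat \<times> nat \<times> nat \<Rightarrow> idx" where
  "ix (TP,i,j,k) = (True, int i, j, k)"
| "ix (TKb,i,j,k) = (True, - int i, j, k)"
| "ix (TQ,i,j,k) = (False, int i, j, k)"
| "ix (TLb,i,j,k) = (False, - int i, j, k)"

lemma rho_bword: "b \<in> basis_idx \<Longrightarrow> rho q (bword b) (D 0 0) = ind (ix b)"
proof -
  assume b: "b \<in> basis_idx"
  obtain t i j k where bb: "b = (t,i,j,k)" by (cases b) auto
  show ?thesis
    using b rho_P[of q True i j k] rho_P[of q False i j k] rho_B[of i q True j k] rho_B[of i q False j k]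
    unfolding bb by (cases t) (auto simp: basis_idx_def gX_def gXb_def)
qed

lemma ix_inj: "inj_on ix basis_idx"
proof (rule inj_onI)
  fix a b assume a: "a \<in> basis_idx" and b: "b \<in> basis_idx" and e: "ix a = ix b"
  obtain t i j k where aa: "a = (t,i,j,k)" by (cases a) auto
  obtain t' i' j' k' where bb: "b = (t',i',j',k')" by (cases b) auto
  show "a = b" using a b e unfolding aa bb
    by (cases t; cases t') (auto simp: basis_idx_def)
qed



section \<open>Independence\<close>

definition A0 :: "gen list set" where
  "A0 = set [[GK,GKb,GK],[GK],[GKb,GK,GKb],[GKb],[GK,GKb],[GKb,GK],
             [GL,GLb,GL],[GL],[GLb,GL,GLb],[GLb],[GL,GLb],[GLb,GL],[],
             [GK,GE],[GE,GK],[GL,GE],[GE,GL],[GKb,GE],[GE,GKb],[GLb,GE],[GE,GLb],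
             [GK,GF],[GF,GK],[GL,GF],[GF,GL],[GKb,GF],[GF,GKb],[GLb,GF],[GF,GLb],
             [GE,GF],[GF,GE]]"

lemma finite_A0 [simp]: "finite A0" by (simp add: A0_def)

lemma Sm_mon: "finite A \<Longrightarrow> w \<in> A \<Longrightarrow> (\<Sum>a\<in>A. mon w a * z a) = z w"
proof -
  assume "finite A" "w \<in> A"
  have "\<And>a. mon w a * z a = (if w = a then z w else 0)" by (simp add: mon_def)
  then show ?thesis using \<open>finite A\<close> \<open>w \<in> A\<close> by (simp add: sum.delta)
qed
lemma Sm_sub: "(\<Sum>a\<in>A. fa_sub f g a * z a) = (\<Sum>a\<in>A. f a * z a) - (\<Sum>a\<in>A. g a * z a)"
  by (simp add: fa_sub_def left_diff_distrib sum_subtractf)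
lemma Sm_add: "(\<Sum>a\<in>A. fa_add f g a * z a) = (\<Sum>a\<in>A. f a * z a) + (\<Sum>a\<in>A. g a * z a)"
  by (simp add: fa_add_def distrib_right sum.distrib)
lemma Sm_smul: "(\<Sum>a\<in>A. fa_smul c f a * z a) = c * (\<Sum>a\<in>A. f a * z a)"
  by (simp add: fa_smul_def sum_distrib_left mult.assoc)

lemma O7T: "opK True (opKb True x) p + opK False (opKb False x) p = x p"
  using O7[of True x p] by simp



lemma supp_rels: "r \<in> U_rels q \<Longrightarrow> r a \<noteq> 0 \<Longrightarrow> a \<in> A0"
  unfolding U_rels_def
  apply (simp only: insert_iff empty_iff)
  apply (elim disjE)
  apply (simp_all add: fa_sub_def fa_add_def fa_smul_def mon_def A0_def split: if_splits)
  done

lemma A0_mem: "w \<in> A0 \<longleftrightarrow> w \<in> set [[GK,GKb,GK],[GK],[GKb,GK,GKb],[GKb],[GK,GKb],[GKb,GK],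
             [GL,GLb,GL],[GL],[GLb,GL,GLb],[GLb],[GL,GLb],[GLb,GL],[],
             [GK,GE],[GE,GK],[GL,GE],[GE,GL],[GKb,GE],[GE,GKb],[GLb,GE],[GE,GLb],
             [GK,GF],[GF,GK],[GL,GF],[GF,GL],[GKb,GF],[GF,GKb],[GLb,GF],[GF,GLb],
             [GE,GF],[GF,GE]]" by (simp add: A0_def)

lemma G_rels:
  assumes r: "r \<in> U_rels q" and q: "q \<noteq> 0" and d: "dd q \<noteq> 0"
  shows "(\<Sum>a\<in>A0. r a * rho q a y p) = 0"
  using r unfolding U_rels_def
  apply (simp only: insert_iff empty_iff)
  apply (elim disjE)
  apply (simp_all only: Sm_sub Sm_add Sm_smul)
  apply (simp_all add: Sm_mon A0_mem)
  apply (simp_all add: O1 O2 O8 O10 O12 O14 q d)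
  using O7T[of y p] O16[OF q d, of y p] O3 by (simp_all add: dd_def)


definition Nf :: "complex \<Rightarrow> gen list set \<Rightarrow> fa \<Rightarrow> vec" where
  "Nf q A x = (\<lambda>p. \<Sum>w\<in>A. x w * rho q w (D 0 0) p)"

definition supp :: "fa \<Rightarrow> gen list set" where "supp x = {w. x w \<noteq> 0}"

lemma Nf_mono: "finite A \<Longrightarrow> supp x \<subseteq> A \<Longrightarrow> Nf q A x = Nf q (supp x) x"
  unfolding Nf_def supp_def
  by (rule ext, rule sum.mono_neutral_right) auto

lemma ideal_N:
  assumes "x \<in> U_ideal q" and q: "q \<noteq> 0" and d: "dd q \<noteq> 0"
  shows "finite (supp x) \<and> Nf q (supp x) x = (\<lambda>p. 0)"
  using assms(1)
proof (induction rule: U_ideal.induct)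
  case zero
  then show ?case by (simp add: supp_def fa_zero_def Nf_def)
next
  case (gen r u v)
  let ?B = "(\<lambda>a. u @ a @ v) ` A0"
  have sub: "supp (ctx u v r) \<subseteq> ?B"
  proof
    fix w assume "w \<in> supp (ctx u v r)"
    then have nz: "ctx u v r w \<noteq> 0" by (simp add: supp_def)
    then obtain a where w: "w = u @ a @ v" using ctx_not by blast
    then have "r a \<noteq> 0" using nz by simp
    then show "w \<in> ?B" using w supp_rels[OF gen] by blast
  qed
  have fin: "finite ?B" by simp
  have inj: "inj_on (\<lambda>a. u @ a @ v) A0" by (rule inj_onI) simp
  have "Nf q ?B (ctx u v r) = (\<lambda>p. \<Sum>a\<in>A0. r a * rho q u (rho q a (rho q v (D 0 0))) p)"
    unfolding Nf_def by (simp add: sum.reindex[OF inj] rho_app)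
  also have "\<dots> = rho q u (\<lambda>p. \<Sum>a\<in>A0. r a * rho q a (rho q v (D 0 0)) p)"
    by (simp add: rho_sum)
  also have "\<dots> = (\<lambda>p. 0)"
    using G_rels[OF gen q d] by (simp add: rho_zero)
  finally show ?case using Nf_mono[OF fin sub] fin sub finite_subset gen_eq
    by (metis)
next
  case (add a b)
  have s: "supp (fa_add a b) \<subseteq> supp a \<union> supp b" by (auto simp: supp_def fa_add_def)
  have f: "finite (supp a \<union> supp b)" using add by simp
  have "Nf q (supp a \<union> supp b) (fa_add a b) = (\<lambda>p. Nf q (supp a \<union> supp b) a p + Nf q (supp a \<union> supp b) b p)"
    by (simp add: Nf_def fa_add_def distrib_right sum.distrib)
  also have "\<dots> = (\<lambda>p. 0)"
    using add Nf_mono[OF f, of a q] Nf_mono[OF f, of b q] by auto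
  finally show ?case using Nf_mono[OF f s] f s finite_subset by metis
next
  case (smul a c)
  have s: "supp (fa_smul c a) \<subseteq> supp a" by (auto simp: supp_def fa_smul_def)
  have f: "finite (supp a)" using smul by simp
  have "Nf q (supp a) (fa_smul c a) = (\<lambda>p. c * Nf q (supp a) a p)"
    by (simp add: Nf_def fa_smul_def sum_distrib_left mult.assoc)
  also have "\<dots> = (\<lambda>p. 0)" using smul by simp
  finally show ?case using Nf_mono[OF f s] f s finite_subset by metis
qed

lemma independence:
  assumes q: "q \<noteq> 0" and d: "dd q \<noteq> 0"
    and S: "finite S" "S \<subseteq> basis_idx" and I: "lincomb S c \<in> U_ideal q" and b0: "b0 \<in> S"
  shows "c b0 = 0"
proof -
  let ?B = "bword ` S"
  have sub: "supp (lincomb S c) \<subseteq> ?B"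
  proof
    fix w assume "w \<in> supp (lincomb S c)"
    then have "(\<Sum>b\<in>S. c b * mon (bword b) w) \<noteq> 0" by (simp add: supp_def lincomb_def)
    then obtain b where "b \<in> S" "c b * mon (bword b) w \<noteq> 0"
      using sum.not_neutral_contains_not_neutral by blast
    then have "w = bword b" by (simp add: mon_def split: if_splits)
    then show "w \<in> ?B" using \<open>b \<in> S\<close> by blast
  qed
  have fin: "finite ?B" using S by simp
  have "Nf q ?B (lincomb S c) = (\<lambda>p. 0)" using ideal_N[OF I q d] Nf_mono[OF fin sub] by simp
  then have "0 = Nf q ?B (lincomb S c) (ix b0)" by simp
  also have "\<dots> = (\<Sum>w\<in>?B. \<Sum>b\<in>S. c b * (mon (bword b) w * rho q w (D 0 0) (ix b0)))"
    by (simp add: Nf_def lincomb_def sum_distrib_right mult.assoc)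
  also have "\<dots> = (\<Sum>b\<in>S. c b * (\<Sum>w\<in>?B. mon (bword b) w * rho q w (D 0 0) (ix b0)))"
    by (subst sum.swap) (simp add: sum_distrib_left)
  also have "\<dots> = (\<Sum>b\<in>S. c b * rho q (bword b) (D 0 0) (ix b0))"
    using fin by (intro sum.cong refl) (simp add: Sm_mon)
  also have "\<dots> = (\<Sum>b\<in>S. if b = b0 then c b else 0)"
  proof (intro sum.cong refl)
    fix b assume "b \<in> S"
    then have "b \<in> basis_idx" "b0 \<in> basis_idx" using S b0 by auto
    have "ix b0 = ix b \<longleftrightarrow> b = b0" using inj_onD[OF ix_inj] \<open>b \<in> basis_idx\<close> \<open>b0 \<in> basis_idx\<close> by metis
    then show "c b * rho q (bword b) (D 0 0) (ix b0) = (if b = b0 then c b else 0)"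
      using \<open>b \<in> basis_idx\<close> by (simp add: rho_bword ind_def)
  qed
  also have "\<dots> = c b0" using S b0 by simp
  finally show ?thesis by simp
qed




section \<open>Spanning\<close>

definition Rep :: "complex \<Rightarrow> fa \<Rightarrow> bool" where
  "Rep q x \<longleftrightarrow> (\<exists>S c. finite S \<and> S \<subseteq> basis_idx \<and> fa_sub x (lincomb S c) \<in> U_ideal q)"

abbreviation W :: "complex \<Rightarrow> gen list \<Rightarrow> bool" where "W q w \<equiv> Rep q (mon w)"

lemma I_eq: "x \<in> U_ideal q \<Longrightarrow> (\<And>w. y w = x w) \<Longrightarrow> y \<in> U_ideal q"
proof -
  assume "x \<in> U_ideal q" "\<And>w. y w = x w"
  then have "y = x" by (simp add: fun_eq_iff)
  then show ?thesis using \<open>x \<in> U_ideal q\<close> by simp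
qed

lemma I_comb: "x \<in> U_ideal q \<Longrightarrow> y \<in> U_ideal q \<Longrightarrow> (\<And>w. t w = a * x w + b * y w) \<Longrightarrow> t \<in> U_ideal q"
proof -
  assume x: "x \<in> U_ideal q" and y: "y \<in> U_ideal q" and t: "\<And>w. t w = a * x w + b * y w"
  have "fa_add (fa_smul a x) (fa_smul b y) \<in> U_ideal q"
    using x y by (intro U_ideal.add U_ideal.smul)
  then show ?thesis by (rule I_eq) (simp add: t fa_add_def fa_smul_def)
qed

lemma I_comb3: "x \<in> U_ideal q \<Longrightarrow> y \<in> U_ideal q \<Longrightarrow> z \<in> U_ideal q \<Longrightarrow>
   (\<And>w. t w = a * x w + b * y w + c * z w) \<Longrightarrow> t \<in> U_ideal q"
proof -
  assume x: "x \<in> U_ideal q" and y: "y \<in> U_ideal q" and z: "z \<in> U_ideal q"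
    and t: "\<And>w. t w = a * x w + b * y w + c * z w"
  have "(\<lambda>w. a * x w + b * y w) \<in> U_ideal q" using x y by (rule I_comb) simp
  then show ?thesis using z by (rule I_comb[where a=1 and b=c]) (simp add: t)
qed

lemma I_zero: "(\<lambda>w. 0) \<in> U_ideal q"
  using U_ideal.zero[of q] by (simp add: fa_zero_def)

lemma lincomb_empty: "lincomb {} c = (\<lambda>w. 0)" by (simp add: lincomb_def)

lemma Rep_ideal: "x \<in> U_ideal q \<Longrightarrow> Rep q x"
  unfolding Rep_def
  by (rule exI[of _ "{}"], rule exI[of _ "\<lambda>_. 0"]) (auto simp: lincomb_empty fa_sub_def elim: I_eq)

lemma Rep_shift: "Rep q x \<Longrightarrow> d \<in> U_ideal q \<Longrightarrow> (\<And>w. y w = x w + d w) \<Longrightarrow> Rep q y"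
proof -
  assume "Rep q x" and d: "d \<in> U_ideal q" and y: "\<And>w. y w = x w + d w"
  then obtain S c where S: "finite S" "S \<subseteq> basis_idx" and I: "fa_sub x (lincomb S c) \<in> U_ideal q"
    unfolding Rep_def by blast
  have "fa_sub y (lincomb S c) \<in> U_ideal q"
    using I d by (rule I_comb[where a=1 and b=1]) (simp add: fa_sub_def y)
  then show ?thesis using S unfolding Rep_def by blast
qed

lemma sum_restr: "finite S \<Longrightarrow> S1 \<subseteq> S \<Longrightarrow> (\<Sum>t\<in>S. if t \<in> S1 then f t else 0) = sum f S1"
  by (simp add: sum.inter_restrict[symmetric] Int_absorb1)

lemma Rep_lin: "Rep q x \<Longrightarrow> Rep q y \<Longrightarrow> Rep q (\<lambda>w. a * x w + b * y w)"
proof -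
  assume "Rep q x" "Rep q y"
  then obtain S1 c1 S2 c2 where S1: "finite S1" "S1 \<subseteq> basis_idx" and I1: "fa_sub x (lincomb S1 c1) \<in> U_ideal q"
    and S2: "finite S2" "S2 \<subseteq> basis_idx" and I2: "fa_sub y (lincomb S2 c2) \<in> U_ideal q"
    unfolding Rep_def by blast
  define S where "S = S1 \<union> S2"
  define c where "c t = a * (if t \<in> S1 then c1 t else 0) + b * (if t \<in> S2 then c2 t else 0)" for t
  have fS: "finite S" using S1 S2 by (simp add: S_def)
  have L: "lincomb S c w = a * lincomb S1 c1 w + b * lincomb S2 c2 w" for w
  proof -
    have "lincomb S c w = (\<Sum>t\<in>S. a * (if t \<in> S1 then c1 t * mon (bword t) w else 0)
        + b * (if t \<in> S2 then c2 t * mon (bword t) w else 0))"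
      unfolding lincomb_def c_def by (intro sum.cong refl) (auto simp: algebra_simps)
    also have "\<dots> = a * (\<Sum>t\<in>S. if t \<in> S1 then c1 t * mon (bword t) w else 0)
        + b * (\<Sum>t\<in>S. if t \<in> S2 then c2 t * mon (bword t) w else 0)"
      by (simp add: sum.distrib sum_distrib_left)
    also have "\<dots> = a * lincomb S1 c1 w + b * lincomb S2 c2 w"
      using fS by (simp add: sum_restr S_def lincomb_def)
    finally show ?thesis .
  qed
  have "fa_sub (\<lambda>w. a * x w + b * y w) (lincomb S c) \<in> U_ideal q"
    using I1 I2 by (rule I_comb[where a=a and b=b]) (simp add: fa_sub_def L algebra_simps)
  then show ?thesis using fS S1 S2 unfolding Rep_def S_def by blast
qed

lemma Rep_comb: "Rep q x \<Longrightarrow> d \<in> U_ideal q \<Longrightarrow> (\<And>w. y w = a * x w + d w) \<Longrightarrow> Rep q y"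
proof -
  assume x: "Rep q x" and d: "d \<in> U_ideal q" and y: "\<And>w. y w = a * x w + d w"
  have "Rep q (\<lambda>w. a * x w + 0 * x w)" using x x by (rule Rep_lin)
  then show ?thesis using d by (rule Rep_shift) (simp add: y)
qed

lemma Rep_add: "Rep q x \<Longrightarrow> Rep q y \<Longrightarrow> d \<in> U_ideal q \<Longrightarrow> (\<And>w. t w = a * x w + b * y w + d w) \<Longrightarrow> Rep q t"
  by (rule Rep_shift[OF Rep_lin]) auto

lemma Rep_sum: "finite S \<Longrightarrow> (\<And>b. b \<in> S \<Longrightarrow> Rep q (f b)) \<Longrightarrow> Rep q (\<lambda>w. \<Sum>b\<in>S. c b * f b w)"
proof (induction S rule: finite_induct)
  case empty then show ?case by (simp add: Rep_ideal I_zero)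
next
  case (insert a S)
  have "Rep q (\<lambda>w. c a * f a w + 1 * (\<Sum>b\<in>S. c b * f b w))"
    using insert by (intro Rep_lin) auto
  then show ?case using insert by simp
qed

lemma W_iff: "(\<lambda>w. mon a w - c * mon b w) \<in> U_ideal q \<Longrightarrow> c \<noteq> 0 \<Longrightarrow> W q a \<longleftrightarrow> W q b"
proof
  assume d: "(\<lambda>w. mon a w - c * mon b w) \<in> U_ideal q" and c: "c \<noteq> 0"
  { assume "W q b"
    then show "W q a" using d by (rule Rep_comb[where a=c]) simp }
  { assume "W q a"
    moreover have "(\<lambda>w. (- 1 / c) * (mon a w - c * mon b w)) \<in> U_ideal q"
      using d d by (rule I_comb[where a="-1/c" and b=0]) simp
    ultimately show "W q b" by (rule Rep_comb[where a="1/c"]) (simp add: c field_simps) }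
qed




lemma relI: "r \<in> U_rels q \<Longrightarrow> ctx u v r \<in> U_ideal q" by (rule ctx_I)

lemmas fa_defs = fa_sub_def fa_add_def fa_smul_def

lemma R1: "(\<lambda>w. mon (u @ gX s # gXb s # gX s # v) w - 1 * mon (u @ gX s # v) w) \<in> U_ideal q"
proof (cases s)
  case True
  have H: "ctx u v (fa_sub (mon [GK,GKb,GK]) (mon [GK])) \<in> U_ideal q" by (rule relI) (unfold U_rels_def, blast)
  show ?thesis by (rule I_eq[OF H]) (simp only: ctx_simps, simp add: True fa_defs gX_def gXb_def)
next
  case False
  have H: "ctx u v (fa_sub (mon [GL,GLb,GL]) (mon [GL])) \<in> U_ideal q" by (rule relI) (unfold U_rels_def, blast)
  show ?thesis by (rule I_eq[OF H]) (simp only: ctx_simps, simp add: False fa_defs gX_def gXb_def)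
qed

lemma R2: "(\<lambda>w. mon (u @ gXb s # gX s # gXb s # v) w - 1 * mon (u @ gXb s # v) w) \<in> U_ideal q"
proof (cases s)
  case True
  have H: "ctx u v (fa_sub (mon [GKb,GK,GKb]) (mon [GKb])) \<in> U_ideal q" by (rule relI) (unfold U_rels_def, blast)
  show ?thesis by (rule I_eq[OF H]) (simp only: ctx_simps, simp add: True fa_defs gX_def gXb_def)
next
  case False
  have H: "ctx u v (fa_sub (mon [GLb,GL,GLb]) (mon [GLb])) \<in> U_ideal q" by (rule relI) (unfold U_rels_def, blast)
  show ?thesis by (rule I_eq[OF H]) (simp only: ctx_simps, simp add: False fa_defs gX_def gXb_def)
qed

lemma R3: "(\<lambda>w. mon (u @ gX s # gXb s # v) w - 1 * mon (u @ gXb s # gX s # v) w) \<in> U_ideal q"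
proof (cases s)
  case True
  have H: "ctx u v (fa_sub (mon [GK,GKb]) (mon [GKb,GK])) \<in> U_ideal q" by (rule relI) (unfold U_rels_def, blast)
  show ?thesis by (rule I_eq[OF H]) (simp only: ctx_simps, simp add: True fa_defs gX_def gXb_def)
next
  case False
  have H: "ctx u v (fa_sub (mon [GL,GLb]) (mon [GLb,GL])) \<in> U_ideal q" by (rule relI) (unfold U_rels_def, blast)
  show ?thesis by (rule I_eq[OF H]) (simp only: ctx_simps, simp add: False fa_defs gX_def gXb_def)
qed

lemma R8: "(\<lambda>w. mon (u @ gX s # GE # v) w - q^2 * mon (u @ GE # gX s # v) w) \<in> U_ideal q"
proof (cases s)
  case True
  have H: "ctx u v (fa_sub (mon [GK,GE]) (fa_smul (q^2) (mon [GE,GK]))) \<in> U_ideal q" by (rule relI) (unfold U_rels_def, blast)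
  show ?thesis by (rule I_eq[OF H]) (simp only: ctx_simps, simp add: True fa_defs gX_def gXb_def)
next
  case False
  have H: "ctx u v (fa_sub (mon [GL,GE]) (fa_smul (q^2) (mon [GE,GL]))) \<in> U_ideal q" by (rule relI) (unfold U_rels_def, blast)
  show ?thesis by (rule I_eq[OF H]) (simp only: ctx_simps, simp add: False fa_defs gX_def gXb_def)
qed

lemma R10: "(\<lambda>w. mon (u @ gXb s # GE # v) w - inverse q ^ 2 * mon (u @ GE # gXb s # v) w) \<in> U_ideal q"
proof (cases s)
  case True
  have H: "ctx u v (fa_sub (mon [GKb,GE]) (fa_smul (inverse q ^ 2) (mon [GE,GKb]))) \<in> U_ideal q" by (rule relI) (unfold U_rels_def, blast)
  show ?thesis by (rule I_eq[OF H]) (simp only: ctx_simps, simp add: True fa_defs gX_def gXb_def)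
next
  case False
  have H: "ctx u v (fa_sub (mon [GLb,GE]) (fa_smul (inverse q ^ 2) (mon [GE,GLb]))) \<in> U_ideal q" by (rule relI) (unfold U_rels_def, blast)
  show ?thesis by (rule I_eq[OF H]) (simp only: ctx_simps, simp add: False fa_defs gX_def gXb_def)
qed

lemma R12: "(\<lambda>w. mon (u @ gX s # GF # v) w - inverse q ^ 2 * mon (u @ GF # gX s # v) w) \<in> U_ideal q"
proof (cases s)
  case True
  have H: "ctx u v (fa_sub (mon [GK,GF]) (fa_smul (inverse q ^ 2) (mon [GF,GK]))) \<in> U_ideal q" by (rule relI) (unfold U_rels_def, blast)
  show ?thesis by (rule I_eq[OF H]) (simp only: ctx_simps, simp add: True fa_defs gX_def gXb_def)
next
  case False
  have H: "ctx u v (fa_sub (mon [GL,GF]) (fa_smul (inverse q ^ 2) (mon [GF,GL]))) \<in> U_ideal q" by (rule relI) (unfold U_rels_def, blast)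
  show ?thesis by (rule I_eq[OF H]) (simp only: ctx_simps, simp add: False fa_defs gX_def gXb_def)
qed

lemma R14: "(\<lambda>w. mon (u @ gXb s # GF # v) w - q^2 * mon (u @ GF # gXb s # v) w) \<in> U_ideal q"
proof (cases s)
  case True
  have H: "ctx u v (fa_sub (mon [GKb,GF]) (fa_smul (q^2) (mon [GF,GKb]))) \<in> U_ideal q" by (rule relI) (unfold U_rels_def, blast)
  show ?thesis by (rule I_eq[OF H]) (simp only: ctx_simps, simp add: True fa_defs gX_def gXb_def)
next
  case False
  have H: "ctx u v (fa_sub (mon [GLb,GF]) (fa_smul (q^2) (mon [GF,GLb]))) \<in> U_ideal q" by (rule relI) (unfold U_rels_def, blast)
  show ?thesis by (rule I_eq[OF H]) (simp only: ctx_simps, simp add: False fa_defs gX_def gXb_def)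
qed

lemma R7: "(\<lambda>w. mon (u @ gX s # gXb s # v) w + mon (u @ gX (\<not>s) # gXb (\<not>s) # v) w - mon (u @ v) w) \<in> U_ideal q"
proof -
  have H: "ctx u v (fa_sub (fa_add (mon [GK,GKb]) (mon [GL,GLb])) (mon [])) \<in> U_ideal q"
    by (rule relI) (unfold U_rels_def, blast)
  show ?thesis by (rule I_eq[OF H]) (simp only: ctx_simps, cases s, simp_all add: fa_defs gX_def gXb_def)
qed

lemma R16: "(\<lambda>w. mon (u @ GE # GF # v) w - mon (u @ GF # GE # v) w
   - 1 / (q - inverse q) * ((mon (u @ GK # v) w + mon (u @ GL # v) w) - (mon (u @ GKb # v) w + mon (u @ GLb # v) w))) \<in> U_ideal q"
proof -
  have H: "ctx u v (fa_sub (fa_sub (mon [GE,GF]) (mon [GF,GE]))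
            (fa_smul (1 / (q - inverse q))
               (fa_sub (fa_add (mon [GK]) (mon [GL])) (fa_add (mon [GKb]) (mon [GLb]))))) \<in> U_ideal q"
    by (rule relI) (unfold U_rels_def, blast)
  show ?thesis by (rule I_eq[OF H]) (simp only: ctx_simps, simp add: fa_defs)
qed




lemma W1: "W q (u @ gX s # gXb s # gX s # v) \<longleftrightarrow> W q (u @ gX s # v)"
  using W_iff[OF R1[of u s v q]] by simp
lemma W2: "W q (u @ gXb s # gX s # gXb s # v) \<longleftrightarrow> W q (u @ gXb s # v)"
  using W_iff[OF R2[of u s v q]] by simp
lemma W3: "W q (u @ gX s # gXb s # v) \<longleftrightarrow> W q (u @ gXb s # gX s # v)"
  using W_iff[OF R3[of u s v q]] by simp
lemma W8: "q \<noteq> 0 \<Longrightarrow> W q (u @ gX s # GE # v) \<longleftrightarrow> W q (u @ GE # gX s # v)"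
  using W_iff[OF R8[of u s v q]] by simp
lemma W10: "q \<noteq> 0 \<Longrightarrow> W q (u @ gXb s # GE # v) \<longleftrightarrow> W q (u @ GE # gXb s # v)"
  using W_iff[OF R10[of u s v q]] by simp
lemma W12: "q \<noteq> 0 \<Longrightarrow> W q (u @ gX s # GF # v) \<longleftrightarrow> W q (u @ GF # gX s # v)"
  using W_iff[OF R12[of u s v q]] by simp
lemma W14: "q \<noteq> 0 \<Longrightarrow> W q (u @ gXb s # GF # v) \<longleftrightarrow> W q (u @ GF # gXb s # v)"
  using W_iff[OF R14[of u s v q]] by simp

lemma W7: "W q (u @ gX s # gXb s # v) \<Longrightarrow> W q (u @ gX (\<not>s) # gXb (\<not>s) # v) \<Longrightarrow> W q (u @ v)"
proof -
  assume a: "W q (u @ gX s # gXb s # v)" and b: "W q (u @ gX (\<not>s) # gXb (\<not>s) # v)"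
  have "(\<lambda>w. (-1) * (mon (u @ gX s # gXb s # v) w + mon (u @ gX (\<not>s) # gXb (\<not>s) # v) w - mon (u @ v) w)) \<in> U_ideal q"
    using R7[of u s v q] R7[of u s v q] by (rule I_comb[where a="-1" and b=0]) simp
  with a b show ?thesis by (rule Rep_add[where a=1 and b=1]) simp
qed

lemma W16g: "(\<lambda>w. mon (u @ GE # GF # v) w - mon (u @ GF # GE # v) w
   - d * ((mon (u @ GK # v) w + mon (u @ GL # v) w) - (mon (u @ GKb # v) w + mon (u @ GLb # v) w))) \<in> U_ideal q \<Longrightarrow>
   W q (u @ GE # GF # v) \<Longrightarrow> W q (u @ GK # v) \<Longrightarrow> W q (u @ GL # v) \<Longrightarrow>
   W q (u @ GKb # v) \<Longrightarrow> W q (u @ GLb # v) \<Longrightarrow> W q (u @ GF # GE # v)"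
proof -
  assume R: "(\<lambda>w. mon (u @ GE # GF # v) w - mon (u @ GF # GE # v) w
   - d * ((mon (u @ GK # v) w + mon (u @ GL # v) w) - (mon (u @ GKb # v) w + mon (u @ GLb # v) w))) \<in> U_ideal q"
  assume a: "W q (u @ GE # GF # v)" "W q (u @ GK # v)" "W q (u @ GL # v)" "W q (u @ GKb # v)" "W q (u @ GLb # v)"
  have r1: "Rep q (\<lambda>w. 1 * mon (u @ GE # GF # v) w + (- d) * mon (u @ GK # v) w)"
    using a(1,2) by (rule Rep_lin)
  have r2: "Rep q (\<lambda>w. 1 * mon (u @ GL # v) w + (- 1) * mon (u @ GKb # v) w)"
    using a(3,4) by (rule Rep_lin)
  have r3: "Rep q (\<lambda>w. 1 * (1 * mon (u @ GE # GF # v) w + (- d) * mon (u @ GK # v) w)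
       + (- d) * (1 * mon (u @ GL # v) w + (- 1) * mon (u @ GKb # v) w))"
    using r1 r2 by (rule Rep_lin)
  have "(\<lambda>w. (-1) * (mon (u @ GE # GF # v) w - mon (u @ GF # GE # v) w
   - d * ((mon (u @ GK # v) w + mon (u @ GL # v) w) - (mon (u @ GKb # v) w + mon (u @ GLb # v) w)))) \<in> U_ideal q"
    using R R by (rule I_comb[where a="-1" and b=0]) simp
  with r3 a(5) show ?thesis by (rule Rep_add[where a=1 and b=d]) (simp add: algebra_simps)
qed

lemma W16: "W q (u @ GE # GF # v) \<Longrightarrow> W q (u @ GK # v) \<Longrightarrow> W q (u @ GL # v) \<Longrightarrow>
   W q (u @ GKb # v) \<Longrightarrow> W q (u @ GLb # v) \<Longrightarrow> W q (u @ GF # GE # v)"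
  by (rule W16g[OF R16[of u v q]])

lemma Ze: "mon (u @ gX (\<not>s) # gX s # gXb s # v) \<in> U_ideal q"
  using R7[of "u @ [gX (\<not>s)]" s v q] R3[of "u @ [gX (\<not>s)]" "\<not>s" v q] R1[of u "\<not>s" v q]
  by (rule I_comb3[where a=1 and b="-1" and c="-1"]) simp

lemma Zf: "mon (u @ gXb (\<not>s) # gX s # gXb s # v) \<in> U_ideal q"
  using R7[of "u @ [gXb (\<not>s)]" s v q] R2[of u "\<not>s" v q] R2[of u "\<not>s" v q]
  by (rule I_comb3[where a=1 and b="-1" and c=0]) simp

lemma Zg: "mon (u @ gX (\<not>s) # gXb s # v) \<in> U_ideal q"
  using R2[of "u @ [gX (\<not>s)]" s v q] R3[of "u @ [gX (\<not>s)]" s "gXb s # v" q] Ze[of u s "gXb s # v" q]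
  by (rule I_comb3[where a="-1" and b="-1" and c=1]) simp

lemma Zh: "mon (u @ gXb (\<not>s) # gXb s # v) \<in> U_ideal q"
  using R2[of "u @ [gXb (\<not>s)]" s v q] R3[of "u @ [gXb (\<not>s)]" s "gXb s # v" q] Zf[of u s "gXb s # v" q]
  by (rule I_comb3[where a="-1" and b="-1" and c=1]) simp




definition lft :: "gen \<Rightarrow> fa \<Rightarrow> fa" where
  "lft g x = (\<lambda>w. case w of [] \<Rightarrow> 0 | h # t \<Rightarrow> if h = g then x t else 0)"

lemma lft_ctx: "lft g (ctx u v r) = ctx (g # u) v r"
proof (rule ext)
  fix w
  show "lft g (ctx u v r) w = ctx (g # u) v r w"
  proof (cases w)
    case Nil then show ?thesis by (simp add: lft_def ctx_not)
  next
    case (Cons h t)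
    show ?thesis
    proof (cases "h = g")
      case False then show ?thesis using Cons by (simp add: lft_def ctx_not)
    next
      case True
      show ?thesis
      proof (cases "\<exists>a. t = u @ a @ v")
        case True2: True
        then obtain a where "t = u @ a @ v" by blast
        then show ?thesis using Cons True ctx_app[of "g # u" v r a] by (simp add: lft_def)
      next
        case False
        then show ?thesis using Cons True by (simp add: lft_def ctx_not)
      qed
    qed
  qed
qed

lemma lft_I: "x \<in> U_ideal q \<Longrightarrow> lft g x \<in> U_ideal q"
proof (induction rule: U_ideal.induct)
  case zero
  have "lft g fa_zero = fa_zero" by (auto simp: lft_def fa_zero_def fun_eq_iff split: list.split)
  then show ?case using U_ideal.zero by simp
next
  case (gen r u v)
  then show ?case by (simp add: gen_eq lft_ctx ctx_I)
next
  case (add a b)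
  have "lft g (fa_add a b) = fa_add (lft g a) (lft g b)"
    by (auto simp: lft_def fa_add_def fun_eq_iff split: list.split)
  then show ?case using add by (simp add: U_ideal.add)
next
  case (smul a c)
  have "lft g (fa_smul c a) = fa_smul c (lft g a)"
    by (auto simp: lft_def fa_smul_def fun_eq_iff split: list.split)
  then show ?case using smul by (simp add: U_ideal.smul)
qed

lemma lft_mon: "lft g (mon w) w' = mon (g # w) w'"
  by (cases w') (auto simp: lft_def mon_def)

lemma lft_sub: "lft g (fa_sub x y) w = lft g x w - lft g y w"
  by (cases w) (auto simp: lft_def fa_sub_def)

lemma lft_lincomb: "lft g (lincomb S c) w = (\<Sum>b\<in>S. c b * mon (g # bword b) w)"
  by (cases w) (auto simp: lft_def lincomb_def mon_def)

lemma Left: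
  assumes B: "\<And>b. b \<in> basis_idx \<Longrightarrow> W q (g # bword b)" and w: "W q w"
  shows "W q (g # w)"
proof -
  obtain S c where S: "finite S" "S \<subseteq> basis_idx" and I: "fa_sub (mon w) (lincomb S c) \<in> U_ideal q"
    using w unfolding Rep_def by blast
  have R: "Rep q (\<lambda>w. \<Sum>b\<in>S. c b * mon (g # bword b) w)"
    using S B by (intro Rep_sum) auto
  have "lft g (fa_sub (mon w) (lincomb S c)) \<in> U_ideal q" using I by (rule lft_I)
  with R show ?thesis by (rule Rep_shift) (simp add: lft_sub lft_mon lft_lincomb)
qed

definition T :: "nat \<Rightarrow> nat \<Rightarrow> gen list" where "T j k = replicate j GE @ replicate k GF"
definition bw :: "bool \<Rightarrow> nat \<Rightarrow> gen list \<Rightarrow> gen list" where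
  "bw s i t = gX s # gXb s # replicate i (gX s) @ t"
definition bb :: "bool \<Rightarrow> nat \<Rightarrow> gen list \<Rightarrow> gen list" where
  "bb s i t = replicate i (gXb s) @ t"

lemma bword_cases: "b \<in> basis_idx \<Longrightarrow> \<exists>s i j k. bword b = bw s i (T j k) \<or> (i > 0 \<and> bword b = bb s i (T j k))"
proof -
  assume b: "b \<in> basis_idx"
  obtain t i j k where bb: "b = (t,i,j,k)" by (cases b) auto
  show ?thesis using b unfolding bb
    apply (cases t)
    apply (rule exI[of _ True], rule exI[of _ i], rule exI[of _ j], rule exI[of _ k], simp add: bw_def T_def gX_def gXb_def)
    apply (rule exI[of _ True], rule exI[of _ i], rule exI[of _ j], rule exI[of _ k], simp add: bb_def T_def gX_def gXb_def basis_idx_def)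
    apply (rule exI[of _ False], rule exI[of _ i], rule exI[of _ j], rule exI[of _ k], simp add: bw_def T_def gX_def gXb_def)
    apply (rule exI[of _ False], rule exI[of _ i], rule exI[of _ j], rule exI[of _ k], simp add: bb_def T_def gX_def gXb_def basis_idx_def)
    done
qed

lemma WB1: "W q (bw s i (T j k))"
proof -
  have "(if s then TP else TQ, i, j, k) \<in> basis_idx" by (simp add: basis_idx_def)
  moreover have "bword (if s then TP else TQ, i, j, k) = bw s i (T j k)"
    by (cases s) (simp_all add: bw_def T_def gX_def gXb_def)
  ultimately show ?thesis
    unfolding Rep_def
    by (intro exI[of _ "{(if s then TP else TQ, i, j, k)}"] exI[of _ "\<lambda>_. 1"])
       (auto simp: lincomb_def fa_sub_def intro: I_eq[OF I_zero])
qed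

lemma WB2: "i > 0 \<Longrightarrow> W q (bb s i (T j k))"
proof -
  assume "i > 0"
  then have "(if s then TKb else TLb, i, j, k) \<in> basis_idx" by (simp add: basis_idx_def)
  moreover have "bword (if s then TKb else TLb, i, j, k) = bb s i (T j k)"
    by (cases s) (simp_all add: bb_def T_def gX_def gXb_def)
  ultimately show ?thesis
    unfolding Rep_def
    by (intro exI[of _ "{(if s then TKb else TLb, i, j, k)}"] exI[of _ "\<lambda>_. 1"])
       (auto simp: lincomb_def fa_sub_def intro: I_eq[OF I_zero])
qed




lemma KX_P: "W q (gX s # bw s i (T j k))"
  using WB1[of q s "Suc i" j k] W3[of q "[gX s]" s "replicate i (gX s) @ T j k"] by (simp add: bw_def)

lemma KXb_P: "W q (gXb s # bw s i (T j k))"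
proof (cases i)
  case 0
  then show ?thesis using WB2[of 1 q s j k] W2[of q "[]" s "T j k"] by (simp add: bw_def bb_def)
next
  case (Suc m)
  then show ?thesis using WB1[of q s m j k] W2[of q "[]" s "gX s # replicate m (gX s) @ T j k"]
     W3[of q "[]" s "replicate m (gX s) @ T j k"] by (simp add: bw_def)
qed

lemma KX_B: "i > 0 \<Longrightarrow> W q (gX s # bb s i (T j k))"
proof (cases i)
  case 0 assume "i > 0" then show ?thesis using 0 by simp
next
  case (Suc m)
  show ?thesis
  proof (cases m)
    case 0
    then show ?thesis using Suc WB1[of q s 0 j k] by (simp add: bw_def bb_def)
  next
    case (Suc n)
    then show ?thesis using \<open>i = Suc m\<close> WB2[of "Suc n" q s j k]
      W3[of q "[]" s "gXb s # replicate n (gXb s) @ T j k"] W2[of q "[]" s "replicate n (gXb s) @ T j k"]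
      by (simp add: bb_def)
  qed
qed

lemma KXb_B: "i > 0 \<Longrightarrow> W q (gXb s # bb s i (T j k))"
  using WB2[of "Suc i" q s j k] by (simp add: bb_def)

lemma KY_P: "W q (gX (\<not>s) # bw s i (T j k))"
  using Rep_ideal[OF Ze[of "[]" s "replicate i (gX s) @ T j k" q]] by (simp add: bw_def)
lemma KYb_P: "W q (gXb (\<not>s) # bw s i (T j k))"
  using Rep_ideal[OF Zf[of "[]" s "replicate i (gX s) @ T j k" q]] by (simp add: bw_def)
lemma KY_B: "i > 0 \<Longrightarrow> W q (gX (\<not>s) # bb s i (T j k))"
  using Rep_ideal[OF Zg[of "[]" s "replicate (i - 1) (gXb s) @ T j k" q]]
  by (cases i) (simp_all add: bb_def)
lemma KYb_B: "i > 0 \<Longrightarrow> W q (gXb (\<not>s) # bb s i (T j k))"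
  using Rep_ideal[OF Zh[of "[]" s "replicate (i - 1) (gXb s) @ T j k" q]]
  by (cases i) (simp_all add: bb_def)

lemma sector: "s' = s \<or> s' = (\<not> s)" by auto

lemma KB_X: assumes "b \<in> basis_idx" shows "W q (gX s' # bword b)"
proof -
  obtain s i j k where h: "bword b = bw s i (T j k) \<or> (i > 0 \<and> bword b = bb s i (T j k))"
    using bword_cases[OF assms] by blast
  show ?thesis
  proof (cases "s' = s")
    case True then show ?thesis using h KX_P[of q s i j k] KX_B[of i q s j k] by auto
  next
    case False then have "s' = (\<not>s)" by auto
    then show ?thesis using h KY_P[of q s i j k] KY_B[of i q s j k] by auto
  qed
qed
lemma KB_Xb: assumes "b \<in> basis_idx" shows "W q (gXb s' # bword b)"
proof -
  obtain s i j k where h: "bword b = bw s i (T j k) \<or> (i > 0 \<and> bword b = bb s i (T j k))"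
    using bword_cases[OF assms] by blast
  show ?thesis
  proof (cases "s' = s")
    case True then show ?thesis using h KXb_P[of q s i j k] KXb_B[of i q s j k] by auto
  next
    case False then have "s' = (\<not>s)" by auto
    then show ?thesis using h KYb_P[of q s i j k] KYb_B[of i q s j k] by auto
  qed
qed

lemma LeftX: "W q w \<Longrightarrow> W q (gX s # w)"
  by (rule Left[OF KB_X])
lemma LeftXb: "W q w \<Longrightarrow> W q (gXb s # w)"
  by (rule Left[OF KB_Xb])

lemma W_repX: "W q w \<Longrightarrow> W q (replicate i (gX s) @ w)"
  by (induction i) (simp_all add: LeftX)
lemma W_repXb: "W q w \<Longrightarrow> W q (replicate i (gXb s) @ w)"
  by (induction i) (simp_all add: LeftXb)

lemma moveE_X: "q \<noteq> 0 \<Longrightarrow> W q (u @ GE # replicate i (gX s) @ v) \<longleftrightarrow> W q (u @ replicate i (gX s) @ GE # v)"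
proof (induction i arbitrary: u)
  case 0 then show ?case by simp
next
  case (Suc i)
  then show ?case using W8[of q u s "replicate i (gX s) @ v"] Suc.IH[of "u @ [gX s]"] by simp
qed
lemma moveE_Xb: "q \<noteq> 0 \<Longrightarrow> W q (u @ GE # replicate i (gXb s) @ v) \<longleftrightarrow> W q (u @ replicate i (gXb s) @ GE # v)"
proof (induction i arbitrary: u)
  case 0 then show ?case by simp
next
  case (Suc i)
  then show ?case using W10[of q u s "replicate i (gXb s) @ v"] Suc.IH[of "u @ [gXb s]"] by simp
qed
lemma moveF_X: "q \<noteq> 0 \<Longrightarrow> W q (u @ GF # replicate i (gX s) @ v) \<longleftrightarrow> W q (u @ replicate i (gX s) @ GF # v)"
proof (induction i arbitrary: u)
  case 0 then show ?case by simp
next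
  case (Suc i)
  then show ?case using W12[of q u s "replicate i (gX s) @ v"] Suc.IH[of "u @ [gX s]"] by simp
qed
lemma moveF_Xb: "q \<noteq> 0 \<Longrightarrow> W q (u @ GF # replicate i (gXb s) @ v) \<longleftrightarrow> W q (u @ replicate i (gXb s) @ GF # v)"
proof (induction i arbitrary: u)
  case 0 then show ?case by simp
next
  case (Suc i)
  then show ?case using W14[of q u s "replicate i (gXb s) @ v"] Suc.IH[of "u @ [gXb s]"] by simp
qed

lemma T_E: "GE # T j k = T (Suc j) k" by (simp add: T_def)

lemma EB_P: "q \<noteq> 0 \<Longrightarrow> W q (GE # bw s i (T j k))"
  using W8[of q "[]" s "gXb s # replicate i (gX s) @ T j k"]
    W10[of q "[gX s]" s "replicate i (gX s) @ T j k"]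
    moveE_X[of q "[gX s, gXb s]" i s "T j k"] WB1[of q s i "Suc j" k]
  by (simp add: bw_def T_E)

lemma EB_B: "q \<noteq> 0 \<Longrightarrow> i > 0 \<Longrightarrow> W q (GE # bb s i (T j k))"
  using moveE_Xb[of q "[]" i s "T j k"] WB2[of i q s "Suc j" k]
  by (simp add: bb_def T_E)

lemma EB: assumes q: "q \<noteq> 0" and "b \<in> basis_idx" shows "W q (GE # bword b)"
proof -
  obtain s i j k where h: "bword b = bw s i (T j k) \<or> (i > 0 \<and> bword b = bb s i (T j k))"
    using bword_cases[OF assms(2)] by blast
  then show ?thesis using EB_P[OF q, of s i j k] EB_B[OF q, of i s j k] by auto
qed

lemma LeftE: "q \<noteq> 0 \<Longrightarrow> W q w \<Longrightarrow> W q (GE # w)"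
  by (rule Left[OF EB])

lemma WT: "W q (T j k)"
  using W7[of q "[]" True "T j k"] WB1[of q True 0 j k] WB1[of q False 0 j k]
  by (simp add: bw_def)

lemma gX_simps: "gX True = GK" "gX False = GL" "gXb True = GKb" "gXb False = GLb"
  by (simp_all add: gX_def gXb_def)

lemma FT: "q \<noteq> 0 \<Longrightarrow> W q (GF # T j k)"
proof (induction j)
  case 0
  then show ?case using WT[of q 0 "Suc k"] by (simp add: T_def)
next
  case (Suc j)
  have a: "W q (GE # GF # T j k)" using Suc by (intro LeftE) auto
  have b: "W q (gX s # T j k)" "W q (gXb s # T j k)" for s
    using WT by (auto intro: LeftX LeftXb)
  show ?case using W16[of q "[]" "T j k"] a b[of True] b[of False]
    by (simp add: gX_simps T_E[symmetric])
qed

lemma FB_P: "q \<noteq> 0 \<Longrightarrow> W q (GF # bw s i (T j k))"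
proof -
  assume q: "q \<noteq> 0"
  have "W q (gX s # gXb s # replicate i (gX s) @ GF # T j k)"
    by (rule LeftX, rule LeftXb, rule W_repX, rule FT[OF q])
  then show ?thesis
  using W12[of q "[]" s "gXb s # replicate i (gX s) @ T j k"]
    W14[of q "[gX s]" s "replicate i (gX s) @ T j k"]
    moveF_X[of q "[gX s, gXb s]" i s "T j k"] q
  by (simp add: bw_def)
qed

lemma FB_B: "q \<noteq> 0 \<Longrightarrow> W q (GF # bb s i (T j k))"
  using moveF_Xb[of q "[]" i s "T j k"] W_repXb[OF FT[of q j k], of i s]
  by (simp add: bb_def)

lemma FB: assumes q: "q \<noteq> 0" and "b \<in> basis_idx" shows "W q (GF # bword b)"
proof -
  obtain s i j k where h: "bword b = bw s i (T j k) \<or> (i > 0 \<and> bword b = bb s i (T j k))"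
    using bword_cases[OF assms(2)] by blast
  then show ?thesis using FB_P[OF q, of s i j k] FB_B[OF q, of s i j k] by auto
qed

lemma LeftF: "q \<noteq> 0 \<Longrightarrow> W q w \<Longrightarrow> W q (GF # w)"
  by (rule Left[OF FB])

lemma W_all: "q \<noteq> 0 \<Longrightarrow> W q w"
proof (induction w)
  case Nil
  then show ?case using WT[of q 0 0] by (simp add: T_def)
next
  case (Cons g w)
  then have q: "q \<noteq> 0" and IH: "W q w" by auto
  show ?case
  proof (cases g)
    case GK then show ?thesis using LeftX[OF IH, of True] by (simp only: gX_simps)
  next
    case GKb then show ?thesis using LeftXb[OF IH, of True] by (simp only: gX_simps)
  next
    case GL then show ?thesis using LeftX[OF IH, of False] by (simp only: gX_simps)
  next
    case GLb then show ?thesis using LeftXb[OF IH, of False] by (simp only: gX_simps)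
  next
    case GE then show ?thesis using LeftE[OF q IH] by simp
  next
    case GF then show ?thesis using LeftF[OF q IH] by simp
  qed
qed

lemma spanning: "q \<noteq> 0 \<Longrightarrow> finite {w. f w \<noteq> 0} \<Longrightarrow> Rep q f"
proof -
  assume q: "q \<noteq> 0" and f: "finite {w. f w \<noteq> 0}"
  have R: "Rep q (\<lambda>w. \<Sum>u\<in>{w. f w \<noteq> 0}. f u * mon u w)"
    by (rule Rep_sum[OF f W_all[OF q]])
  have eq: "f w = (\<Sum>u\<in>{w. f w \<noteq> 0}. f u * mon u w) + 0" for w
  proof -
    have "(\<Sum>u\<in>{w. f w \<noteq> 0}. f u * mon u w) = (\<Sum>u\<in>{w. f w \<noteq> 0}. if w = u then f w else 0)"
      by (intro sum.cong refl) (simp add: mon_def)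
    also have "\<dots> = f w" using f by (simp add: sum.delta)
    finally show ?thesis by simp
  qed
  show ?thesis by (rule Rep_shift[OF R I_zero]) (rule eq)
qed


theorem proposition6:
  fixes q :: complex
  assumes "q \<noteq> 0" and "q \<noteq> 1" and "q \<noteq> -1"
  shows "(\<forall>f::fa. finite {w. f w \<noteq> 0} \<longrightarrow>
            (\<exists>S c. finite S \<and> S \<subseteq> basis_idx \<and> fa_sub f (lincomb S c) \<in> U_ideal q))
       \<and> (\<forall>S c. finite S \<and> S \<subseteq> basis_idx \<and> lincomb S c \<in> U_ideal q \<longrightarrow> (\<forall>b\<in>S. c b = 0))"
proof -
  have d: "dd q \<noteq> 0"
  proof
    assume "dd q = 0"
    then have "q = inverse q" by (simp add: dd_def)
    then have "q * q = 1" using assms(1) by (metis right_inverse)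
    then have "(q - 1) * (q + 1) = 0" by (simp add: algebra_simps)
    then have "q = 1 \<or> q = -1" by (auto simp: eq_neg_iff_add_eq_0)
    then show False using assms by auto
  qed
  show ?thesis
  proof (intro conjI allI impI)
    fix f :: fa assume "finite {w. f w \<noteq> 0}"
    then show "\<exists>S c. finite S \<and> S \<subseteq> basis_idx \<and> fa_sub f (lincomb S c) \<in> U_ideal q"
      using spanning[OF assms(1)] unfolding Rep_def by blast
  next
    fix S c assume H: "finite S \<and> S \<subseteq> basis_idx \<and> lincomb S c \<in> U_ideal q"
    then show "\<forall>b\<in>S. c b = 0" using independence[OF assms(1) d] by blast
  qed
qed

end
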